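(* Let $a<b$ be elements of $\mathcal{C}_n$ and let $N^{[a]}\left(\mathcal{STR}^{(n)}\{a,b\}\right)=\{a_\ell b_{n-\ell}:\ b+1\le\ell\le n\}$. Then $N^{[a]}\left(\mathcal{STR}^{(n)}\{a,b\}\right)$ is a subsemiring of $\mathcal{STR}^{(n)}\{a,b\}$, and it consists exactly of all $a$-nilpotent elements of $\mathcal{STR}^{(n)}\{a,b\}$, i.e. of all $\alpha\in\mathcal{STR}^{(n)}\{a,b\}$ with $\alpha^m=\overline{a}$ for some natural number $m$.
   Context: $\mathcal{C}_n=\{0,1,\dots,n-1\}$ with its usual order; $\widehat{\mathcal{E}}_{\mathcal{C}_n}$ is the set of all order-preserving maps $\mathcal{C}_n\to\mathcal{C}_n$ (not required to fix $0$), a semiring with $(\alpha+\beta)(x)=\max(\alpha(x),\beta(x))$ and $(\alpha\cdot\beta)(x)=\beta(\alpha(x))$. The string $\mathcal{STR}^{(n)}\{a,b\}$ is the set of $\alpha\in\widehat{\mathcal{E}}_{\mathcal{C}_n}$ with image in $\{a,b\}$; its elements are written $a_kb_{n-k}$ ($0\le k\le n$), the map sending $0,\dots,k-1$ to $a$ and $k,\dots,n-1$ to $b$; $\overline{a}=a_nb_0$ and $\overline{b}=a_0b_n$ are the constant maps. *)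

theory Defs
  imports Main
begin

text \<open>Order-preserving self-maps of the chain C_n = {0,...,n-1}, represented
  extensionally as functions nat => nat that are 0 outside {0..<n}.\<close>

definition endo :: "nat \<Rightarrow> (nat \<Rightarrow> nat) set" where
  "endo n = {f. (\<forall>x<n. f x < n) \<and> (\<forall>x y. x \<le> y \<and> y < n \<longrightarrow> f x \<le> f y)
               \<and> (\<forall>x. n \<le> x \<longrightarrow> f x = 0)}"

definition eplus :: "nat \<Rightarrow> (nat \<Rightarrow> nat) \<Rightarrow> (nat \<Rightarrow> nat) \<Rightarrow> (nat \<Rightarrow> nat)" where
  "eplus n f g = (\<lambda>x. if x < n then max (f x) (g x) else 0)"

definition emult :: "nat \<Rightarrow> (nat \<Rightarrow> nat) \<Rightarrow> (nat \<Rightarrow> nat) \<Rightarrow> (nat \<Rightarrow> nat)" where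
  "emult n f g = (\<lambda>x. if x < n then g (f x) else 0)"

definition eone :: "nat \<Rightarrow> (nat \<Rightarrow> nat)" where
  "eone n = (\<lambda>x. if x < n then x else 0)"

fun epow :: "nat \<Rightarrow> (nat \<Rightarrow> nat) \<Rightarrow> nat \<Rightarrow> (nat \<Rightarrow> nat)" where
  "epow n f 0 = eone n"
| "epow n f (Suc m) = emult n (epow n f m) f"

definition STRab :: "nat \<Rightarrow> nat \<Rightarrow> nat \<Rightarrow> (nat \<Rightarrow> nat) set" where
  "STRab n a b = {f \<in> endo n. \<forall>x<n. f x = a \<or> f x = b}"

text \<open>a_k b_{n-k}: sends 0..k-1 to a and k..n-1 to b.\<close>
definition ab :: "nat \<Rightarrow> nat \<Rightarrow> nat \<Rightarrow> nat \<Rightarrow> (nat \<Rightarrow> nat)" where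
  "ab n a b k = (\<lambda>x. if x < k then a else if x < n then b else 0)"

definition Nil_a :: "nat \<Rightarrow> nat \<Rightarrow> nat \<Rightarrow> (nat \<Rightarrow> nat) set" where
  "Nil_a n a b = {ab n a b l | l. b + 1 \<le> l \<and> l \<le> n}"

definition subsemiring :: "nat \<Rightarrow> (nat \<Rightarrow> nat) set \<Rightarrow> (nat \<Rightarrow> nat) set \<Rightarrow> bool" where
  "subsemiring n T S \<longleftrightarrow> T \<subseteq> S \<and> T \<noteq> {} \<and>
     (\<forall>f\<in>T. \<forall>g\<in>T. eplus n f g \<in> T \<and> emult n f g \<in> T)"

end

theory Submission
  imports Defs
begin

lemma ab_in: "a < b \<Longrightarrow> b < n \<Longrightarrow> k \<le> n \<Longrightarrow> ab n a b k \<in> STRab n a b"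
  unfolding STRab_def endo_def ab_def by auto

lemma ab_plus: "a < b \<Longrightarrow> l \<le> n \<Longrightarrow> l' \<le> n \<Longrightarrow> eplus n (ab n a b l) (ab n a b l') = ab n a b (min l l')"
  unfolding eplus_def ab_def by (rule ext) auto

lemma ab_mult: "a < b \<Longrightarrow> b < l' \<Longrightarrow> l \<le> n \<Longrightarrow> emult n (ab n a b l) (ab n a b l') = ab n a b n"
  unfolding emult_def ab_def by (rule ext) auto

lemma ab_pow2: "a < b \<Longrightarrow> b < l \<Longrightarrow> l \<le> n \<Longrightarrow> epow n (ab n a b l) 2 = ab n a b n"
  unfolding numeral_2_eq_2 by (rule ext) (auto simp: emult_def ab_def eone_def)

lemma stuck:
  assumes "\<alpha> b = b" "b < n"
  shows "epow n \<alpha> m b = b"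
  using assms by (induction m) (auto simp: emult_def eone_def)

lemma classify:
  assumes A: "\<alpha> \<in> STRab n a b" and ab: "\<alpha> b = a" and "a < b" "b < n"
  shows "\<alpha> \<in> Nil_a n a b"
proof -
  define k where "k = (LEAST x. n \<le> x \<or> \<alpha> x = b)"
  have ex: "n \<le> n \<or> \<alpha> n = b" by simp
  have kn: "k \<le> n" unfolding k_def by (rule Least_le) simp
  have kP: "n \<le> k \<or> \<alpha> k = b" unfolding k_def by (rule LeastI[of _ n]) simp
  have below: "x < k \<Longrightarrow> \<not> (n \<le> x \<or> \<alpha> x = b)" for x
    unfolding k_def by (rule not_less_Least)
  have mono: "\<And>x y. x \<le> y \<Longrightarrow> y < n \<Longrightarrow> \<alpha> x \<le> \<alpha> y"
    and vals: "\<And>x. x < n \<Longrightarrow> \<alpha> x = a \<or> \<alpha> x = b"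
    and zero: "\<And>x. n \<le> x \<Longrightarrow> \<alpha> x = 0"
    using A unfolding STRab_def endo_def by auto
  have bk: "b < k"
  proof (rule ccontr)
    assume "\<not> b < k"
    then have "k \<le> b" by simp
    with kP assms have "\<alpha> k = b" by auto
    with mono[OF \<open>k \<le> b\<close> \<open>b < n\<close>] ab \<open>a < b\<close> show False by simp
  qed
  have "\<alpha> = ab n a b k"
  proof (rule ext)
    fix x
    show "\<alpha> x = ab n a b k x"
    proof (cases "x < k")
      case True
      then show ?thesis using below[OF True] vals[of x] by (auto simp: ab_def)
    next
      case False
      show ?thesis
      proof (cases "x < n")
        case True
        with False kP have "\<alpha> k = b" by auto
        moreover have "\<alpha> k \<le> \<alpha> x" using mono[of k x] False True by simp
        ultimately show ?thesis using vals[OF True] \<open>a < b\<close> False True by (auto simp: ab_def)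
      next
        case False2: False
        then show ?thesis using zero[of x] False by (auto simp: ab_def)
      qed
    qed
  qed
  then show ?thesis unfolding Nil_a_def using bk kn by auto
qed

theorem proposition9:
  fixes n a b :: nat
  assumes "a < b" and "b < n"
  shows "subsemiring n (Nil_a n a b) (STRab n a b)
       \<and> Nil_a n a b = {\<alpha> \<in> STRab n a b. \<exists>m. epow n \<alpha> m = ab n a b n}"
proof
  show "subsemiring n (Nil_a n a b) (STRab n a b)"
    unfolding subsemiring_def
  proof (intro conjI ballI)
    show "Nil_a n a b \<subseteq> STRab n a b" using ab_in assms unfolding Nil_a_def by auto
    show "Nil_a n a b \<noteq> {}" using assms unfolding Nil_a_def by auto
    fix f g assume f: "f \<in> Nil_a n a b" and g: "g \<in> Nil_a n a b"
    then obtain l l' where l: "f = ab n a b l" "b + 1 \<le> l" "l \<le> n"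
      and l': "g = ab n a b l'" "b + 1 \<le> l'" "l' \<le> n" unfolding Nil_a_def by auto
    show "eplus n f g \<in> Nil_a n a b"
      using l l' ab_plus[OF assms(1)] unfolding Nil_a_def
      by (auto intro!: exI[of _ "min l l'"])
    show "emult n f g \<in> Nil_a n a b"
      using l l' ab_mult[OF assms(1)] assms unfolding Nil_a_def
      by (auto intro!: exI[of _ n])
  qed
  show "Nil_a n a b = {\<alpha> \<in> STRab n a b. \<exists>m. epow n \<alpha> m = ab n a b n}"
  proof (intro equalityI subsetI)
    fix \<alpha> assume "\<alpha> \<in> Nil_a n a b"
    then obtain l where l: "\<alpha> = ab n a b l" "b + 1 \<le> l" "l \<le> n" unfolding Nil_a_def by auto
    then show "\<alpha> \<in> {\<alpha> \<in> STRab n a b. \<exists>m. epow n \<alpha> m = ab n a b n}"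
      using ab_in[OF assms] ab_pow2[OF assms(1), of l n] l by auto
  next
    fix \<alpha> assume "\<alpha> \<in> {\<alpha> \<in> STRab n a b. \<exists>m. epow n \<alpha> m = ab n a b n}"
    then obtain m where A: "\<alpha> \<in> STRab n a b" and m: "epow n \<alpha> m = ab n a b n" by auto
    have "\<alpha> b = a \<or> \<alpha> b = b" using A assms unfolding STRab_def by auto
    moreover have "\<alpha> b \<noteq> b"
    proof
      assume "\<alpha> b = b"
      then have "epow n \<alpha> m b = b" using stuck assms by blast
      with m assms show False by (simp add: ab_def)
    qed
    ultimately show "\<alpha> \<in> Nil_a n a b" using classify A assms by blast
  qed
qed

end
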